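(* Let $d>1$ be a square-free natural number and $k=\mathbb{Q}(\sqrt d, i)$. Let $a+ib\in\mathbb{Q}(i)$ (with $a,b$ rational, $a+ib\neq 0$) be such that $\sqrt{a^2+b^2}\notin\mathbb{Q}(\sqrt d)$, and let $\mathcal{H}$ be an ideal of $k$ with $\mathcal{H}^2=(a+ib)$. Then the class of $\mathcal{H}$ has order exactly $2$ in the class group of $k$ (i.e. $\mathcal{H}$ is not principal).
   Context: $i=\sqrt{-1}$. $(\alpha)$ denotes the principal ideal of $k$ generated by $\alpha$. *)

theory Defs
  imports Complex_Main "HOL-Computational_Algebra.Polynomial" "HOL-Computational_Algebra.Squarefree"
begin

definition alg_int :: "complex \<Rightarrow> bool" where
  "alg_int x \<longleftrightarrow> (\<exists>p :: int poly. lead_coeff p = 1 \<and> poly (map_poly of_int p) x = 0)"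

definition Kfield :: "nat \<Rightarrow> complex set" where
  "Kfield d = {of_rat p + of_rat q * complex_of_real (sqrt (real d))
               + \<i> * (of_rat r + of_rat s * complex_of_real (sqrt (real d))) | p q r s. True}"

definition Qsqrt :: "nat \<Rightarrow> real set" where
  "Qsqrt d = {of_rat p + of_rat q * sqrt (real d) | p q. True}"

definition Ok :: "nat \<Rightarrow> complex set" where
  "Ok d = {x \<in> Kfield d. alg_int x}"

definition frac_ideal :: "nat \<Rightarrow> complex set \<Rightarrow> bool" where
  "frac_ideal d H \<longleftrightarrow> H \<subseteq> Kfield d \<and> H \<noteq> {0} \<and> 0 \<in> H
     \<and> (\<forall>x\<in>H. \<forall>y\<in>H. x + y \<in> H)
     \<and> (\<forall>r\<in>Ok d. \<forall>x\<in>H. r * x \<in> H)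
     \<and> (\<exists>c\<in>Ok d. c \<noteq> 0 \<and> (\<forall>x\<in>H. c * x \<in> Ok d))"

definition ideal_prod :: "complex set \<Rightarrow> complex set \<Rightarrow> complex set" where
  "ideal_prod A B = {(\<Sum>j<n. x j * y j) | (n::nat) x y. \<forall>j<n. x j \<in> A \<and> y j \<in> B}"

definition principal_ideal :: "nat \<Rightarrow> complex \<Rightarrow> complex set" where
  "principal_ideal d \<alpha> = {\<alpha> * x | x. x \<in> Ok d}"

end

theory Submission
  imports Defs "Jordan_Normal_Form.Char_Poly" "HOL-Library.Nat_Bijection"
begin

definition eigint :: "complex \<Rightarrow> bool" where
  "eigint x \<longleftrightarrow> (\<exists>(I::nat set) (M::nat \<Rightarrow> nat \<Rightarrow> int) v. finite I \<and> (\<exists>i\<in>I. v i \<noteq> 0) \<and>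
      (\<forall>i\<in>I. (\<Sum>j\<in>I. of_int (M i j) * v j) = x * v i))"

lemma eigintE:
  assumes "eigint x"
  obtains I :: "nat set" and M :: "nat \<Rightarrow> nat \<Rightarrow> int" and v i0 where "finite I" "i0 \<in> I" "v i0 \<noteq> 0" "\<And>i. i\<in>I \<Longrightarrow> (\<Sum>j\<in>I. of_int (M i j) * v j) = x * v i"
proof -
  from assms[unfolded eigint_def] obtain I :: "nat set" and M :: "nat \<Rightarrow> nat \<Rightarrow> int" and v where h: "finite I" "\<exists>i\<in>I. v i \<noteq> 0" "\<forall>i\<in>I. (\<Sum>j\<in>I. of_int (M i j) * v j) = x * v i"
    by auto
  from h(2) obtain i0 where "i0 \<in> I" "v i0 \<noteq> 0" by (elim bexE)
  then show ?thesis using h by (intro that) auto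
qed

lemma eigintI:
  fixes I :: "nat set" and M :: "nat \<Rightarrow> nat \<Rightarrow> int"
  assumes "finite I" "i0 \<in> I" "v i0 \<noteq> 0" "\<And>i. i\<in>I \<Longrightarrow> (\<Sum>j\<in>I. of_int (M i j) * v j) = x * v i"
  shows "eigint x"
  unfolding eigint_def apply (rule exI[of _ I], rule exI[of _ M], rule exI[of _ v]) using assms by auto
lemma eigint_mult:
  assumes "eigint x" "eigint y" shows "eigint (x * y)"
proof -
  obtain I :: "nat set" and M :: "nat \<Rightarrow> nat \<Rightarrow> int" and v i0 where I: "finite I" "i0 \<in> I" "v i0 \<noteq> 0" and E: "\<And>i. i\<in>I \<Longrightarrow> (\<Sum>j\<in>I. of_int (M i j) * v j) = x * v i"
    using assms(1) by (rule eigintE) blast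
  obtain J :: "nat set" and N :: "nat \<Rightarrow> nat \<Rightarrow> int" and w j0 where J: "finite J" "j0 \<in> J" "w j0 \<noteq> 0" and F: "\<And>i. i\<in>J \<Longrightarrow> (\<Sum>j\<in>J. of_int (N i j) * w j) = y * w i"
    using assms(2) by (rule eigintE) blast
  define K where "K = prod_encode ` (I \<times> J)"
  define P where "P = (\<lambda>k l. M (fst (prod_decode k)) (fst (prod_decode l)) * N (snd (prod_decode k)) (snd (prod_decode l)))"
  define z where "z = (\<lambda>k. v (fst (prod_decode k)) * w (snd (prod_decode k)))"
  have inj: "inj_on prod_encode (I \<times> J)" by (meson inj_on_subset inj_prod_encode subset_UNIV)
  have "finite K" unfolding K_def using I J by auto
  moreover have "prod_encode (i0,j0) \<in> K" "z (prod_encode (i0,j0)) \<noteq> 0" unfolding K_def z_def using I J by auto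
  moreover have "\<And>k. k\<in>K \<Longrightarrow> (\<Sum>l\<in>K. of_int (P k l) * z l) = (x*y) * z k"
  proof -
    fix k assume "k \<in> K"
    then obtain i j where ij: "i \<in> I" "j \<in> J" "k = prod_encode (i,j)" unfolding K_def by auto
    have "(\<Sum>l\<in>K. of_int (P k l) * z l) = (\<Sum>(i',j')\<in>I\<times>J. of_int (P k (prod_encode (i',j'))) * z (prod_encode (i',j')))"
      unfolding K_def by (subst sum.reindex[OF inj]) (auto simp: case_prod_unfold)
    also have "\<dots> = (\<Sum>(i',j')\<in>I\<times>J. (of_int (M i i') * v i') * (of_int (N j j') * w j'))"
      by (rule sum.cong) (auto simp: P_def z_def ij)
    also have "\<dots> = (\<Sum>i'\<in>I. of_int (M i i') * v i') * (\<Sum>j'\<in>J. of_int (N j j') * w j')"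
      by (simp add: sum_product sum.cartesian_product)
    also have "\<dots> = (x*y) * z k" using E[OF ij(1)] F[OF ij(2)] by (simp add: z_def ij)
    finally show "(\<Sum>l\<in>K. of_int (P k l) * z l) = (x*y) * z k" .
  qed
  ultimately show ?thesis by (intro eigintI[of K "prod_encode (i0,j0)" z P]) auto
qed

lemma eigint_add:
  assumes "eigint x" "eigint y" shows "eigint (x + y)"
proof -
  obtain I :: "nat set" and M :: "nat \<Rightarrow> nat \<Rightarrow> int" and v i0 where I: "finite I" "i0 \<in> I" "v i0 \<noteq> 0" and E: "\<And>i. i\<in>I \<Longrightarrow> (\<Sum>j\<in>I. of_int (M i j) * v j) = x * v i"
    using assms(1) by (rule eigintE) blast
  obtain J :: "nat set" and N :: "nat \<Rightarrow> nat \<Rightarrow> int" and w j0 where J: "finite J" "j0 \<in> J" "w j0 \<noteq> 0" and F: "\<And>i. i\<in>J \<Longrightarrow> (\<Sum>j\<in>J. of_int (N i j) * w j) = y * w i"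
    using assms(2) by (rule eigintE) blast
  define K where "K = prod_encode ` (I \<times> J)"
  define P where "P = (\<lambda>k l. (if snd (prod_decode k) = snd (prod_decode l) then M (fst (prod_decode k)) (fst (prod_decode l)) else 0)
      + (if fst (prod_decode k) = fst (prod_decode l) then N (snd (prod_decode k)) (snd (prod_decode l)) else 0))"
  define z where "z = (\<lambda>k. v (fst (prod_decode k)) * w (snd (prod_decode k)))"
  have inj: "inj_on prod_encode (I \<times> J)" by (meson inj_on_subset inj_prod_encode subset_UNIV)
  have "finite K" unfolding K_def using I J by auto
  moreover have "prod_encode (i0,j0) \<in> K" "z (prod_encode (i0,j0)) \<noteq> 0" unfolding K_def z_def using I J by auto
  moreover have "\<And>k. k\<in>K \<Longrightarrow> (\<Sum>l\<in>K. of_int (P k l) * z l) = (x+y) * z k"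
  proof -
    fix k assume "k \<in> K"
    then obtain i j where ij: "i \<in> I" "j \<in> J" "k = prod_encode (i,j)" unfolding K_def by auto
    have "(\<Sum>l\<in>K. of_int (P k l) * z l) = (\<Sum>(i',j')\<in>I\<times>J. of_int (P k (prod_encode (i',j'))) * z (prod_encode (i',j')))"
      unfolding K_def by (subst sum.reindex[OF inj]) (auto simp: case_prod_unfold)
    also have "\<dots> = (\<Sum>(i',j')\<in>I\<times>J. (if j' = j then of_int (M i i') * v i' * w j' else 0)
                  + (if i' = i then v i' * (of_int (N j j') * w j') else 0))"
      by (rule sum.cong) (auto simp: P_def z_def ij algebra_simps)
    also have "\<dots> = (\<Sum>(i',j')\<in>I\<times>J. (if j' = j then of_int (M i i') * v i' * w j' else 0))
                  + (\<Sum>(i',j')\<in>I\<times>J. (if i' = i then v i' * (of_int (N j j') * w j') else 0))"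
      by (simp add: sum.distrib case_prod_unfold)
    also have "(\<Sum>(i',j')\<in>I\<times>J. (if j' = j then of_int (M i i') * v i' * w j' else 0)) = (\<Sum>i'\<in>I. of_int (M i i') * v i' * w j)"
      using J ij by (simp add: sum.cartesian_product[symmetric] sum.delta')
    also have "(\<Sum>(i',j')\<in>I\<times>J. (if i' = i then v i' * (of_int (N j j') * w j') else 0)) = (\<Sum>j'\<in>J. v i * (of_int (N j j') * w j'))"
      using I ij by (simp add: sum.cartesian_product[symmetric]) (subst sum.swap, simp add: sum.delta sum.delta')
    also have "(\<Sum>i'\<in>I. of_int (M i i') * v i' * w j) + (\<Sum>j'\<in>J. v i * (of_int (N j j') * w j')) = (x+y) * z k"
    proof -
      have 1: "(\<Sum>i'\<in>I. of_int (M i i') * v i' * w j) = (\<Sum>i'\<in>I. of_int (M i i') * v i') * w j" by (simp add: sum_distrib_right)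
      have 2: "(\<Sum>j'\<in>J. v i * (of_int (N j j') * w j')) = v i * (\<Sum>j'\<in>J. of_int (N j j') * w j')" by (simp add: sum_distrib_left)
      show ?thesis unfolding 1 2 E[OF ij(1)] F[OF ij(2)] by (simp add: z_def ij algebra_simps)
    qed
    finally show "(\<Sum>l\<in>K. of_int (P k l) * z l) = (x+y) * z k" .
  qed
  ultimately show ?thesis by (intro eigintI[of K "prod_encode (i0,j0)" z P]) auto
qed

lemma eigint_alg_int: assumes "eigint x" shows "alg_int x"
proof -
  obtain I :: "nat set" and M :: "nat \<Rightarrow> nat \<Rightarrow> int" and v i0 where I: "finite I" "i0 \<in> I" "v i0 \<noteq> 0"
    and E: "\<And>i. i\<in>I \<Longrightarrow> (\<Sum>j\<in>I. of_int (M i j) * v j) = x * v i"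
    using assms by (rule eigintE) blast
  define c where "c = card I"
  obtain h where h: "bij_betw h {0..<c} I" using ex_bij_betw_nat_finite[OF I(1)] c_def by blast
  define A :: "int mat" where "A = mat c c (\<lambda>(a,b). M (h a) (h b))"
  define V :: "complex vec" where "V = vec c (\<lambda>a. v (h a))"
  define A' :: "complex mat" where "A' = map_mat of_int A"
  have A: "A \<in> carrier_mat c c" unfolding A_def by auto
  have A': "A' \<in> carrier_mat c c" unfolding A'_def using A by auto
  have hI: "\<And>a. a < c \<Longrightarrow> h a \<in> I" using h by (auto simp: bij_betw_def)
  obtain a0 where a0: "a0 < c" "h a0 = i0" using h I(2) by (auto simp: bij_betw_def)
  have "V \<noteq> 0\<^sub>v c" 
  proof
    assume "V = 0\<^sub>v c"
    then have "V $ a0 = 0" using a0 by auto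
    then show False using a0 I(3) by (simp add: V_def)
  qed
  moreover have "A' *\<^sub>v V = x \<cdot>\<^sub>v V"
  proof (rule eq_vecI)
    fix a assume a: "a < dim_vec (x \<cdot>\<^sub>v V)"
    then have a: "a < c" by (simp add: V_def)
    have "(A' *\<^sub>v V) $ a = (\<Sum>b\<in>{0..<c}. of_int (M (h a) (h b)) * v (h b))"
      using a by (simp add: A'_def A_def V_def mult_mat_vec_def scalar_prod_def)
    also have "\<dots> = (\<Sum>j\<in>I. of_int (M (h a) j) * v j)"
      using sum.reindex_bij_betw[OF h, of "\<lambda>j. of_int (M (h a) j) * v j"] by simp
    also have "\<dots> = x * v (h a)" using E[OF hI[OF a]] .
    finally show "(A' *\<^sub>v V) $ a = (x \<cdot>\<^sub>v V) $ a" using a by (simp add: V_def)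
  qed (simp add: A'_def A_def V_def)
  ultimately have "eigenvalue A' x" unfolding eigenvalue_def eigenvector_def using A'
    by (intro exI[of _ V]) (auto simp: V_def)
  then have "poly (char_poly A') x = 0" using eigenvalue_root_char_poly[OF A'] by simp
  moreover have "char_poly A' = map_poly of_int (char_poly A)"
    unfolding A'_def using of_int_hom.char_poly_hom[OF A] by simp
  moreover have "lead_coeff (char_poly A) = 1" using degree_monic_char_poly[OF A] by simp
  ultimately show ?thesis unfolding alg_int_def by auto
qed

lemma alg_int_eigint: assumes "alg_int x" shows "eigint x"
proof -
  obtain p :: "int poly" where p: "lead_coeff p = 1" "poly (map_poly of_int p) x = 0"
    using assms unfolding alg_int_def by blast
  define n where "n = degree p"
  have n: "n > 0"
  proof (rule ccontr)
    assume "\<not> n > 0"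
    then have "degree p = 0" by (simp add: n_def)
    then show False using p unfolding poly_altdef by (simp add: degree_map_poly)
  qed
  define M :: "nat \<Rightarrow> nat \<Rightarrow> int" where "M = (\<lambda>i j. if Suc i < n then (if j = Suc i then 1 else 0) else - coeff p j)"
  define v where "v = (\<lambda>i::nat. x ^ i)"
  have P: "(\<Sum>j\<le>n. of_int (coeff p j) * x ^ j) = 0"
    using p(2) unfolding poly_altdef by (simp add: n_def degree_map_poly)
  have "(\<Sum>j\<le>n. of_int (coeff p j) * x ^ j) = (\<Sum>j<n. of_int (coeff p j) * x ^ j) + x ^ n"
    using p(1) by (simp add: lessThan_Suc_atMost[symmetric] n_def)
  with P have P2: "(\<Sum>j<n. of_int (- coeff p j) * x ^ j) = x ^ n"
    by (simp add: sum_negf) (metis add.commute add_eq_0_iff)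
  have "\<And>i. i \<in> {..<n} \<Longrightarrow> (\<Sum>j\<in>{..<n}. of_int (M i j) * v j) = x * v i"
  proof -
    fix i assume i: "i \<in> {..<n}"
    show "(\<Sum>j\<in>{..<n}. of_int (M i j) * v j) = x * v i"
    proof (cases "Suc i < n")
      case True
      then have "(\<Sum>j\<in>{..<n}. of_int (M i j) * v j) = (\<Sum>j\<in>{..<n}. if j = Suc i then x ^ Suc i else 0)"
        by (intro sum.cong) (auto simp: M_def v_def)
      also have "\<dots> = x * v i" using True by (simp add: v_def)
      finally show ?thesis .
    next
      case False
      then have "i = n - 1" using i by auto
      then have "x * v i = x ^ n" using n by (simp add: v_def power_eq_if)
      moreover have "(\<Sum>j\<in>{..<n}. of_int (M i j) * v j) = (\<Sum>j<n. of_int (- coeff p j) * x ^ j)"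
        using False by (intro sum.cong) (auto simp: M_def v_def)
      ultimately show ?thesis using P2 by simp
    qed
  qed
  then show ?thesis using n by (intro eigintI[of "{..<n}" 0 v M]) (auto simp: v_def)
qed

lemma alg_int_add: "alg_int x \<Longrightarrow> alg_int y \<Longrightarrow> alg_int (x + y)"
  using alg_int_eigint eigint_alg_int eigint_add by blast
lemma alg_int_mult: "alg_int x \<Longrightarrow> alg_int y \<Longrightarrow> alg_int (x * y)"
  using alg_int_eigint eigint_alg_int eigint_mult by blast

lemma alg_int_of_int: "alg_int (of_int n)"
  unfolding alg_int_def by (rule exI[of _ "[:-n, 1:]"]) simp

lemma alg_int_1: "alg_int 1" using alg_int_of_int[of 1] by simp
lemma alg_int_0: "alg_int 0" using alg_int_of_int[of 0] by simp

lemma alg_int_cnj: assumes "alg_int x" shows "alg_int (cnj x)"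
proof -
  obtain p :: "int poly" where p: "lead_coeff p = 1" "poly (map_poly of_int p) x = 0"
    using assms unfolding alg_int_def by blast
  have "cnj (poly (map_poly of_int p) x) = poly (map_poly of_int p) (cnj x)"
    by (rule poly_cnj_real) (simp add: coeff_map_poly)
  then show ?thesis using p unfolding alg_int_def by auto
qed

lemma of_rat_complex: "(of_rat r :: complex) = complex_of_real (of_rat r)"
  by (cases r) (simp add: of_rat_rat)

lemma rat_alg_int: assumes "alg_int (of_rat r)" shows "r \<in> \<int>"
proof -
  obtain p :: "int poly" where p: "lead_coeff p = 1" "poly (map_poly of_int p) (of_rat r :: complex) = 0"
    using assms unfolding alg_int_def by blast
  define n where "n = degree p"
  have "(\<Sum>j\<le>n. of_int (coeff p j) * (of_rat r :: complex) ^ j) = 0"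
    using p(2) unfolding poly_altdef by (simp add: n_def degree_map_poly)
  then have "of_rat (\<Sum>j\<le>n. of_int (coeff p j) * r ^ j) = (0::complex)"
    by (simp add: of_rat_sum of_rat_mult of_rat_power)
  then have S: "(\<Sum>j\<le>n. of_int (coeff p j) * r ^ j) = 0" by simp
  obtain a b where ab: "quotient_of r = (a, b)" by (cases "quotient_of r")
  have b: "b > 0" using quotient_of_denom_pos[OF ab] .
  have cop: "coprime a b" using quotient_of_coprime[OF ab] .
  have r: "r = of_int a / of_int b" using quotient_of_div[OF ab] .
  have "(\<Sum>j\<le>n. of_int (coeff p j) * r ^ j) * (of_int b) ^ n = (\<Sum>j\<le>n. of_int (coeff p j * a ^ j * b ^ (n - j)))"
    unfolding sum_distrib_right
  proof (rule sum.cong)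
    fix j assume "j \<in> {..n}"
    then have "(of_int b :: rat) ^ n = of_int b ^ j * of_int b ^ (n - j)" by (simp add: power_add[symmetric])
    then show "of_int (coeff p j) * r ^ j * (of_int b) ^ n = of_int (coeff p j * a ^ j * b ^ (n - j))"
      using b by (simp add: r power_divide)
  qed simp
  with S have "(of_int (\<Sum>j\<le>n. coeff p j * a ^ j * b ^ (n - j)) :: rat) = 0" by simp
  then have S2: "(\<Sum>j\<le>n. coeff p j * a ^ j * b ^ (n - j)) = 0" by (simp only: of_int_eq_0_iff)
  have "(\<Sum>j\<le>n. coeff p j * a ^ j * b ^ (n - j)) = (\<Sum>j<n. coeff p j * a ^ j * b ^ (n - j)) + a ^ n"
    using p(1) by (simp add: lessThan_Suc_atMost[symmetric] n_def)
  with S2 have "a ^ n = - (\<Sum>j<n. coeff p j * a ^ j * b ^ (n - j))" by simp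
  moreover have "b dvd (\<Sum>j<n. coeff p j * a ^ j * b ^ (n - j))"
    by (intro dvd_sum dvd_mult dvd_power) auto
  ultimately have "b dvd a ^ n" by simp
  moreover have "coprime b (a ^ n)" using cop by (simp add: coprime_commute)
  ultimately have "is_unit b" using coprime_common_divisor[of b "a^n" b] by simp
  then have "b = 1" using b by simp
  then show ?thesis using r by simp
qed

lemma sqrt_irrat: assumes "d > 1" "squarefree d" shows "sqrt (real d) \<notin> \<rat>"
proof
  assume "sqrt (real d) \<in> \<rat>"
  then obtain r where r: "sqrt (real d) = of_rat r" by (auto elim: Rats_cases)
  have "(of_rat (r^2) :: real) = of_rat (of_nat d)"
    using r[symmetric] by (simp add: of_rat_power)
  then have r2: "r^2 = of_nat d" by (simp only: of_rat_eq_iff)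
  obtain a b where ab: "quotient_of r = (a, b)" by (cases "quotient_of r")
  have b: "b > 0" using quotient_of_denom_pos[OF ab] .
  have cop: "coprime a b" using quotient_of_coprime[OF ab] .
  have rr: "r = of_int a / of_int b" using quotient_of_div[OF ab] .
  have "(of_int (a^2) :: rat) = of_int (int d * b^2)"
    using r2 b unfolding rr by (simp add: power_divide field_simps)
  then have ad: "a^2 = int d * b^2" by (simp only: of_int_eq_iff)
  then have "b^2 dvd a^2" by simp
  moreover have "coprime (a^2) (b^2)" using cop by simp
  ultimately have "is_unit (b^2)" using coprime_common_divisor[of "a^2" "b^2" "b^2"] by simp
  then have "b^2 = 1" by simp
  then have "(b - 1) * (b + 1) = 0" by (simp add: algebra_simps power2_eq_square)
  then have "b = 1" using b by auto
  with ad have "a^2 = int d" by simp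
  then have "int ((nat \<bar>a\<bar>)^2) = int d" by (simp add: of_nat_power)
  then have "(nat \<bar>a\<bar>)^2 = d" by (simp only: of_nat_eq_iff)
  then have "nat \<bar>a\<bar> dvd 1" using assms(2) unfolding squarefree_def by auto
  then have "d = 1" using \<open>(nat \<bar>a\<bar>)^2 = d\<close> by simp
  then show False using assms(1) by simp
qed

definition KE :: "nat \<Rightarrow> rat \<Rightarrow> rat \<Rightarrow> rat \<Rightarrow> rat \<Rightarrow> complex" where
  "KE d p q r s = Complex (of_rat p + of_rat q * sqrt (real d)) (of_rat r + of_rat s * sqrt (real d))"

lemma KE_add: "KE d p q r s + KE d p' q' r' s' = KE d (p+p') (q+q') (r+r') (s+s')"
  unfolding KE_def by (simp add: complex_eq_iff of_rat_add algebra_simps)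

lemma KE_mult_aux:
  fixes e dd p1 q1 r1 s1 p2 q2 r2 s2 :: real
  assumes "e * e = dd"
  shows "(p1 + q1 * e) * (p2 + q2 * e) - (r1 + s1 * e) * (r2 + s2 * e) =
     p1 * p2 + dd * q1 * q2 - r1 * r2 - dd * s1 * s2 + (p1 * q2 + q1 * p2 - r1 * s2 - s1 * r2) * e"
    "(p1 + q1 * e) * (r2 + s2 * e) + (r1 + s1 * e) * (p2 + q2 * e) =
     p1 * r2 + dd * q1 * s2 + r1 * p2 + dd * s1 * q2 + (p1 * s2 + q1 * r2 + r1 * q2 + s1 * p2) * e"
  unfolding assms[symmetric] by (simp_all add: algebra_simps)

lemma KE_mult: "KE d p1 q1 r1 s1 * KE d p2 q2 r2 s2 =
   KE d (p1*p2 + of_nat d*q1*q2 - r1*r2 - of_nat d*s1*s2) (p1*q2+q1*p2 - r1*s2 - s1*r2)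
        (p1*r2 + of_nat d*q1*s2 + r1*p2 + of_nat d*s1*q2) (p1*s2+q1*r2+r1*q2+s1*p2)"
proof -
  have DD: "sqrt (real d) * sqrt (real d) = real d" by simp
  show ?thesis unfolding KE_def complex_eq_iff
    apply (simp add: of_rat_add of_rat_mult of_rat_diff)
    using KE_mult_aux[OF DD] by simp
qed

lemma KE_of_int: "(of_int n :: complex) = KE d (of_int n) 0 0 0"
  unfolding KE_def by (simp add: complex_eq_iff)

lemma KE_rat: "Complex (of_rat a) (of_rat b) = KE d a 0 b 0"
  unfolding KE_def by simp

lemma Kfield_iff: "z \<in> Kfield d \<longleftrightarrow> (\<exists>p q r s. z = KE d p q r s)"
proof -
  have "\<And>p q r s. (of_rat p + of_rat q * complex_of_real (sqrt (real d)) + \<i> * (of_rat r + of_rat s * complex_of_real (sqrt (real d)))) = KE d p q r s"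
    unfolding KE_def by (simp add: complex_eq_iff of_rat_complex)
  then show ?thesis unfolding Kfield_def by auto
qed

lemma Qsqrt_unique:
  assumes irr: "sqrt (real d) \<notin> \<rat>"
    and eq: "of_rat p + of_rat q * sqrt (real d) = of_rat p' + of_rat q' * sqrt (real d)"
  shows "p = p' \<and> q = q'"
proof (cases "q = q'")
  case True
  then show ?thesis using eq by simp
next
  case False
  then have ne: "(of_rat q' - of_rat q :: real) \<noteq> 0" by simp
  from eq have "(of_rat q' - of_rat q) * sqrt (real d) = of_rat p - of_rat p'" by (simp add: algebra_simps)
  then have "sqrt (real d) = (of_rat p - of_rat p') / (of_rat q' - of_rat q)" using ne by (simp add: field_simps)
  also have "\<dots> = of_rat ((p - p') / (q' - q))" by (simp add: of_rat_divide of_rat_diff)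
  finally have "sqrt (real d) \<in> \<rat>" by simp
  then show ?thesis using irr by simp
qed

lemma KE_inj:
  assumes irr: "sqrt (real d) \<notin> \<rat>" and eq: "KE d p q r s = KE d p' q' r' s'"
  shows "p = p' \<and> q = q' \<and> r = r' \<and> s = s'"
proof -
  from eq have "of_rat p + of_rat q * sqrt (real d) = of_rat p' + of_rat q' * sqrt (real d)"
    "of_rat r + of_rat s * sqrt (real d) = of_rat r' + of_rat s' * sqrt (real d)"
    unfolding KE_def complex_eq_iff by simp_all
  then show ?thesis using Qsqrt_unique[OF irr] by blast
qed

definition phi :: "nat \<Rightarrow> complex \<Rightarrow> complex" where
  "phi d z = (THE w. \<exists>p q r s. z = KE d p q r s \<and> w = KE d p (-q) (-r) s)"

lemma phi_KE: assumes irr: "sqrt (real d) \<notin> \<rat>"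
  shows "phi d (KE d p q r s) = KE d p (-q) (-r) s"
  unfolding phi_def
proof (rule the_equality)
  show "\<exists>p' q' r' s'. KE d p q r s = KE d p' q' r' s' \<and> KE d p (-q) (-r) s = KE d p' (-q') (-r') s'" by blast
next
  fix w assume "\<exists>p' q' r' s'. KE d p q r s = KE d p' q' r' s' \<and> w = KE d p' (-q') (-r') s'"
  then obtain p' q' r' s' where "KE d p q r s = KE d p' q' r' s'" "w = KE d p' (-q') (-r') s'" by blast
  then show "w = KE d p (-q) (-r) s" using KE_inj[OF irr] by blast
qed

lemma Kfield_add: "z \<in> Kfield d \<Longrightarrow> w \<in> Kfield d \<Longrightarrow> z + w \<in> Kfield d"
  unfolding Kfield_iff by (auto simp: KE_add) (intro exI, rule refl)

lemma Kfield_mult: "z \<in> Kfield d \<Longrightarrow> w \<in> Kfield d \<Longrightarrow> z * w \<in> Kfield d"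
  unfolding Kfield_iff by (auto simp: KE_mult) (intro exI, rule refl)

lemma Kfield_of_int: "of_int n \<in> Kfield d"
  unfolding Kfield_iff using KE_of_int by blast

lemma Kfield_rat: "Complex (of_rat a) (of_rat b) \<in> Kfield d"
  unfolding Kfield_iff using KE_rat by blast

lemma phi_add: assumes irr: "sqrt (real d) \<notin> \<rat>" and "z \<in> Kfield d" "w \<in> Kfield d"
  shows "phi d (z + w) = phi d z + phi d w"
  using assms(2,3) unfolding Kfield_iff by (auto simp: KE_add phi_KE[OF irr])

lemma phi_mult: assumes irr: "sqrt (real d) \<notin> \<rat>" and "z \<in> Kfield d" "w \<in> Kfield d"
  shows "phi d (z * w) = phi d z * phi d w"
  using assms(2,3) unfolding Kfield_iff by (auto simp: KE_mult phi_KE[OF irr] algebra_simps)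

lemma phi_of_int: assumes irr: "sqrt (real d) \<notin> \<rat>" shows "phi d (of_int n) = of_int n"
  using KE_of_int[of n d] phi_KE[OF irr] by simp

lemma phi_rat: assumes irr: "sqrt (real d) \<notin> \<rat>" shows "phi d (Complex (of_rat a) (of_rat b)) = cnj (Complex (of_rat a) (of_rat b))"
proof -
  have "phi d (KE d a 0 b 0) = KE d a 0 (-b) 0" using phi_KE[OF irr, of a 0 b 0] by simp
  then show ?thesis unfolding KE_rat[of a b d] by (simp add: KE_def of_rat_minus complex_eq_iff)
qed

lemma phi_Kfield: assumes irr: "sqrt (real d) \<notin> \<rat>" and "z \<in> Kfield d" shows "phi d z \<in> Kfield d"
  using assms(2) unfolding Kfield_iff by (auto simp: phi_KE[OF irr]) (intro exI, rule refl)

lemma poly_phi: assumes irr: "sqrt (real d) \<notin> \<rat>" and z: "z \<in> Kfield d"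
  shows "poly (map_poly of_int P) z \<in> Kfield d \<and> phi d (poly (map_poly of_int P) z) = poly (map_poly of_int P) (phi d z)"
proof (induction P rule: pCons_induct)
  case 0
  then show ?case using Kfield_of_int[of 0 d] phi_of_int[OF irr, of 0] by simp
next
  case (pCons c P)
  have e: "map_poly (of_int :: int \<Rightarrow> complex) (pCons c P) = pCons (of_int c) (map_poly of_int P)"
    by (intro poly_eqI) (simp add: coeff_map_poly coeff_pCons split: nat.splits)
  show ?case unfolding e poly_pCons
    using pCons z Kfield_add Kfield_mult Kfield_of_int phi_add[OF irr] phi_mult[OF irr] phi_of_int[OF irr]
    by simp
qed

lemma alg_int_phi: assumes irr: "sqrt (real d) \<notin> \<rat>" and z: "z \<in> Kfield d" and a: "alg_int z"
  shows "alg_int (phi d z)"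
proof -
  obtain p :: "int poly" where p: "lead_coeff p = 1" "poly (map_poly of_int p) z = 0"
    using a unfolding alg_int_def by blast
  have "poly (map_poly of_int p) (phi d z) = phi d 0" using poly_phi[OF irr z, of p] p(2) by simp
  also have "phi d 0 = 0" using phi_of_int[OF irr, of 0] by simp
  finally show ?thesis using p(1) unfolding alg_int_def by blast
qed

lemma int_recip_one: fixes N :: rat assumes "N \<in> \<int>" "1 / N \<in> \<int>" "N > 0" shows "N = 1"
proof -
  obtain k where k: "N = of_int k" using assms(1) by (auto elim: Ints_cases)
  have "k \<ge> 1" using assms(3) k by simp
  obtain l where l: "1 / N = of_int l" using assms(2) by (auto elim: Ints_cases)
  have "1 / N > 0" using assms(3) by simp
  then have "l \<ge> 1" using l by simp
  then have "1 / N \<ge> 1" using l by simp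
  then have "N \<le> 1" using assms(3) by (simp add: field_simps)
  then show ?thesis using \<open>k \<ge> 1\<close> k by simp
qed

lemma of_rat_abs: "(of_rat \<bar>x\<bar> :: real) = \<bar>of_rat x\<bar>"
  by (cases "x \<ge> 0") (auto simp: of_rat_minus)

lemma final_arith:
  fixes P Q m :: rat
  assumes irr: "sqrt (real d) \<notin> \<rat>" and m: "m > 0"
    and h1: "P^2 + of_nat d * Q^2 = m"
    and h2: "2 * (P^2 - of_nat d * Q^2) / m \<in> \<int>"
  shows "\<exists>x y. sqrt (of_rat m) = of_rat x + of_rat y * sqrt (real d)"
proof -
  obtain k where k: "2 * (P^2 - of_nat d * Q^2) / m = of_int k" using h2 by (auto elim: Ints_cases)
  have dq: "of_nat d * Q^2 \<ge> 0" by simp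
  have pq: "P^2 \<ge> 0" by simp
  have keq: "2 * (P^2 - of_nat d * Q^2) = of_int k * m" using k m by (simp add: field_simps)
  have keq2: "of_int k * m = 2 * P^2 - 2 * (of_nat d * Q^2)" using keq by (simp add: algebra_simps)
  have "of_int k * m \<le> 2 * m" using keq2 h1 dq pq by linarith
  then have "k \<le> 2" using m by (simp add: mult_le_cancel_right)
  have ee: "(of_int k + 2) * m = of_int k * m + 2*m" by (simp add: algebra_simps)
  have "0 \<le> (of_int k + 2) * m" unfolding ee using keq2 h1 dq pq by linarith
  then have "0 \<le> of_int k + (2::rat)" using m by (simp add: zero_le_mult_iff)
  then have "k \<ge> -2" by simp
  have Dsq: "sqrt (real d) * sqrt (real d) = real d" by simp
  have sq: "\<And>x::rat. sqrt (of_rat (x^2)) = of_rat \<bar>x\<bar>"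
  proof -
    fix x :: rat
    have "(of_rat (x^2) :: real) = (of_rat x)^2" by (simp add: of_rat_power)
    then have "sqrt (of_rat (x^2)) = \<bar>of_rat x\<bar>" by simp
    then show "sqrt (of_rat (x^2)) = of_rat \<bar>x\<bar>" by (simp only: of_rat_abs)
  qed
  have sqd: "\<And>x::rat. sqrt (of_rat (of_nat d * x^2)) = of_rat \<bar>x\<bar> * sqrt (real d)"
  proof -
    fix x :: rat
    have "(of_rat (of_nat d * x^2) :: real) = real d * (of_rat x)^2" by (simp add: of_rat_power of_rat_mult)
    then have "sqrt (of_rat (of_nat d * x^2)) = sqrt (real d) * \<bar>of_rat x\<bar>" by (simp add: real_sqrt_mult)
    then show "sqrt (of_rat (of_nat d * x^2)) = of_rat \<bar>x\<bar> * sqrt (real d)" by (simp only: of_rat_abs mult.commute)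
  qed
  consider "k = 2" | "k = 1" | "k = 0" | "k = -1" | "k = -2" using \<open>k \<le> 2\<close> \<open>k \<ge> -2\<close> by linarith
  then show ?thesis
  proof cases
    case 1
    then have "m = P^2" using keq h1 by simp
    then show ?thesis using sq[of P] by (intro exI[of _ "\<bar>P\<bar>"] exI[of _ 0]) simp
  next
    case 2
    then have "m = of_nat d * (2*Q)^2" using keq h1 by (simp add: power_mult_distrib)
    then show ?thesis using sqd[of "2*Q"] by (intro exI[of _ 0] exI[of _ "\<bar>2*Q\<bar>"]) simp
  next
    case 3
    then have e: "P^2 = of_nat d * Q^2" using keq by simp
    have "Q \<noteq> 0"
    proof
      assume "Q = 0" then have "m = 0" using e h1 by simp
      then show False using m by simp
    qed
    then have "of_nat d = (P / Q)^2" using e by (simp add: power_divide)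
    then have "real d = of_rat ((P/Q)^2)" by (metis of_rat_of_nat_eq)
    then have "sqrt (real d) = of_rat \<bar>P/Q\<bar>" by (simp add: of_rat_power of_rat_abs)
    then show ?thesis using irr by simp
  next
    case 4
    then have "m = (2*P)^2" using keq h1 by (simp add: power_mult_distrib)
    then show ?thesis using sq[of "2*P"] by (intro exI[of _ "\<bar>2*P\<bar>"] exI[of _ 0]) simp
  next
    case 5
    then have "m = of_nat d * Q^2" using keq h1 by simp
    then show ?thesis using sqd[of Q] by (intro exI[of _ 0] exI[of _ "\<bar>Q\<bar>"]) simp
  qed
qed

lemma KE_cong: "a = a' \<Longrightarrow> b = b' \<Longrightarrow> c = c' \<Longrightarrow> e = e' \<Longrightarrow> KE d a b c e = KE d a' b' c' e'"
  by simp

lemma Ok_mult: "x \<in> Ok d \<Longrightarrow> y \<in> Ok d \<Longrightarrow> x * y \<in> Ok d"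
  unfolding Ok_def using Kfield_mult alg_int_mult by blast

lemma Ok_add: "x \<in> Ok d \<Longrightarrow> y \<in> Ok d \<Longrightarrow> x + y \<in> Ok d"
  unfolding Ok_def using Kfield_add alg_int_add by blast

lemma Ok_0: "0 \<in> Ok d"
  unfolding Ok_def using Kfield_of_int[of 0 d] alg_int_0 by simp

lemma Ok_1: "1 \<in> Ok d"
  unfolding Ok_def using Kfield_of_int[of 1 d] alg_int_1 by simp

lemma Ok_sum: fixes n :: nat shows "(\<And>j. j < n \<Longrightarrow> aa j \<in> Ok d \<and> bb j \<in> Ok d) \<Longrightarrow> (\<Sum>j<n. aa j * bb j) \<in> Ok d"
proof (induction n)
  case 0
  then show ?case using Ok_0 by simp
next
  case (Suc n)
  then show ?case using Ok_add Ok_mult by simp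
qed

theorem mainTheorem1:
  fixes d :: nat and a b :: rat and H :: "complex set"
  assumes "d > 1" and "squarefree d"
    and "Complex (of_rat a) (of_rat b) \<noteq> 0"
    and "sqrt ((of_rat a)\<^sup>2 + (of_rat b)\<^sup>2) \<notin> Qsqrt d"
    and "frac_ideal d H"
    and "ideal_prod H H = principal_ideal d (Complex (of_rat a) (of_rat b))"
  shows "\<not> (\<exists>\<alpha>\<in>Kfield d. H = principal_ideal d \<alpha>)"
proof
  assume "\<exists>\<alpha>\<in>Kfield d. H = principal_ideal d \<alpha>"
  then obtain \<alpha> where \<alpha>K: "\<alpha> \<in> Kfield d" and H\<alpha>: "H = principal_ideal d \<alpha>" by blast
  have irr: "sqrt (real d) \<notin> \<rat>" using sqrt_irrat assms(1,2) by blast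
  define \<gamma> where "\<gamma> = Complex (of_rat a) (of_rat b)"
  have \<gamma>0: "\<gamma> \<noteq> 0" using assms(3) \<gamma>_def by simp
  have \<gamma>K: "\<gamma> \<in> Kfield d" unfolding \<gamma>_def by (rule Kfield_rat)
  have HH: "ideal_prod H H = {\<gamma> * x | x. x \<in> Ok d}" using assms(6) unfolding principal_ideal_def \<gamma>_def .
  have H': "H = {\<alpha> * x | x. x \<in> Ok d}" using H\<alpha> unfolding principal_ideal_def .
  have \<alpha>H: "\<alpha> \<in> H" unfolding H' using Ok_1 by (auto intro!: exI[of _ 1])
  have \<alpha>0: "\<alpha> \<noteq> 0"
  proof
    assume "\<alpha> = 0"
    then have "H = {0}" unfolding H' using Ok_1 by auto
    then show False using assms(5) unfolding frac_ideal_def by simp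
  qed
  have "\<alpha> * \<alpha> \<in> ideal_prod H H" unfolding ideal_prod_def
  proof (rule CollectI, intro exI conjI)
    show "\<alpha> * \<alpha> = (\<Sum>j<(1::nat). (\<lambda>_. \<alpha>) j * (\<lambda>_. \<alpha>) j)" by (simp add: card_lessThan)
    show "\<forall>j<(1::nat). (\<lambda>_. \<alpha>) j \<in> H \<and> (\<lambda>_. \<alpha>) j \<in> H" using \<alpha>H by simp
  qed
  then obtain u where uO: "u \<in> Ok d" and u: "\<alpha> * \<alpha> = \<gamma> * u" unfolding HH by blast
  have "\<gamma> \<in> ideal_prod H H" unfolding HH using Ok_1 by (auto intro!: exI[of _ 1])
  then obtain n :: nat and x y :: "nat \<Rightarrow> complex" where \<gamma>s: "\<gamma> = (\<Sum>j<n. x j * y j)" and xy: "\<forall>j<n. x j \<in> H \<and> y j \<in> H"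
    unfolding ideal_prod_def by blast
  have "\<forall>j. \<exists>c. j < n \<longrightarrow> c \<in> Ok d \<and> x j = \<alpha> * c" using xy unfolding H' by blast
  then obtain aa where aa: "\<forall>j. j < n \<longrightarrow> aa j \<in> Ok d \<and> x j = \<alpha> * aa j" by (rule choice[THEN exE]) blast
  have "\<forall>j. \<exists>c. j < n \<longrightarrow> c \<in> Ok d \<and> y j = \<alpha> * c" using xy unfolding H' by blast
  then obtain bb where bb: "\<forall>j. j < n \<longrightarrow> bb j \<in> Ok d \<and> y j = \<alpha> * bb j" by (rule choice[THEN exE]) blast
  define s where "s = (\<Sum>j<n. aa j * bb j)"
  have sO: "s \<in> Ok d" unfolding s_def using aa bb by (intro Ok_sum) auto
  have "\<gamma> = (\<Sum>j<n. (\<alpha> * \<alpha>) * (aa j * bb j))" unfolding \<gamma>s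
    by (rule sum.cong) (use aa bb in \<open>auto simp: algebra_simps\<close>)
  also have "\<dots> = \<alpha> * \<alpha> * s" unfolding s_def by (simp add: sum_distrib_left)
  finally have "\<gamma> = \<gamma> * (u * s)" using u by (simp add: algebra_simps)
  then have us: "u * s = 1" using \<gamma>0 by (metis mult.right_neutral mult_left_cancel)
  have uK: "u \<in> Kfield d" and ua: "alg_int u" using uO unfolding Ok_def by auto
  have sK: "s \<in> Kfield d" and sa: "alg_int s" using sO unfolding Ok_def by auto
  define \<mu> where "\<mu> = u * phi d u"
  define \<mu>' where "\<mu>' = s * phi d s"
  have \<mu>a: "alg_int \<mu>" unfolding \<mu>_def using ua alg_int_phi[OF irr uK ua] alg_int_mult by blast
  have \<mu>'a: "alg_int \<mu>'" unfolding \<mu>'_def using sa alg_int_phi[OF irr sK sa] alg_int_mult by blast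
  have "\<mu> * \<mu>' = (u * s) * (phi d u * phi d s)" unfolding \<mu>_def \<mu>'_def by (simp add: algebra_simps)
  also have "\<dots> = phi d (u * s)" using us phi_mult[OF irr uK sK] by simp
  also have "\<dots> = 1" using us phi_of_int[OF irr, of 1] by simp
  finally have \<mu>\<mu>': "\<mu> * \<mu>' = 1" .
  have \<mu>0: "\<mu> \<noteq> 0" using \<mu>\<mu>' by auto
  have \<mu>'eq: "\<mu>' = inverse \<mu>" using \<mu>\<mu>' by (metis inverse_unique)
  obtain p q r s0 where \<alpha>e: "\<alpha> = KE d p q r s0" using \<alpha>K Kfield_iff by blast
  define P' where "P' = p*p - of_nat d*q*q + r*r - of_nat d*s0*s0"
  define Q' where "Q' = 2*(p*s0 - q*r)"
  have \<kappa>: "\<alpha> * phi d \<alpha> = KE d P' 0 0 Q'"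
  proof -
    have "\<alpha> * phi d \<alpha> = KE d p q r s0 * KE d p (-q) (-r) s0" unfolding \<alpha>e phi_KE[OF irr] ..
    also have "\<dots> = KE d P' 0 0 Q'" unfolding KE_mult P'_def Q'_def
      by (rule KE_cong; simp add: algebra_simps)
    finally show ?thesis .
  qed
  have \<phi>\<gamma>: "phi d \<gamma> = cnj \<gamma>" unfolding \<gamma>_def by (rule phi_rat[OF irr])
  have \<kappa>\<kappa>: "(\<alpha> * phi d \<alpha>) * (\<alpha> * phi d \<alpha>) = (\<gamma> * cnj \<gamma>) * \<mu>"
  proof -
    have "(\<alpha> * phi d \<alpha>) * (\<alpha> * phi d \<alpha>) = (\<alpha> * \<alpha>) * phi d (\<alpha> * \<alpha>)"
      using phi_mult[OF irr \<alpha>K \<alpha>K] by (simp add: algebra_simps)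
    also have "\<dots> = (\<gamma> * u) * (phi d \<gamma> * phi d u)" using u phi_mult[OF irr \<gamma>K uK] by simp
    also have "\<dots> = (\<gamma> * cnj \<gamma>) * \<mu>" unfolding \<phi>\<gamma> \<mu>_def by (simp add: algebra_simps)
    finally show ?thesis .
  qed
  define m where "m = a^2 + b^2"
  have m0: "m > 0"
  proof -
    have "a \<noteq> 0 \<or> b \<noteq> 0" using \<gamma>0 unfolding \<gamma>_def by (auto simp: complex_eq_iff)
    then show ?thesis unfolding m_def by (auto simp: add_pos_nonneg add_nonneg_pos)
  qed
  define mm where "mm = (of_rat m :: real)"
  have mm0: "mm > 0" unfolding mm_def using m0 by simp
  have \<gamma>\<gamma>: "\<gamma> * cnj \<gamma> = complex_of_real mm"
    unfolding \<gamma>_def mm_def m_def complex_mult_cnj by (simp add: of_rat_add of_rat_power)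
  define X where "X = (of_rat P' :: real)"
  define Y where "Y = (of_rat Q' :: real) * sqrt (real d)"
  have Y2: "Y * Y = of_rat Q' * of_rat Q' * real d" unfolding Y_def
    by (simp add: algebra_simps)
  have \<kappa>c: "KE d P' 0 0 Q' = Complex X Y" unfolding KE_def X_def Y_def by simp
  have eq: "Complex X Y * Complex X Y = complex_of_real mm * \<mu>" using \<kappa>\<kappa> \<gamma>\<gamma> \<kappa> \<kappa>c by simp
  have Re\<mu>: "Re \<mu> = (X*X - Y*Y) / mm"
    using arg_cong[OF eq, of Re] mm0 by (simp add: field_simps)
  have Im\<mu>: "Im \<mu> = (2*X*Y) / mm"
    using arg_cong[OF eq, of Im] mm0 by (simp add: field_simps)
  define Nr where "Nr = ((P'^2 + of_nat d * Q'^2) / m)^2"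
  have "(Re \<mu>)^2 + (Im \<mu>)^2 = ((X*X + Y*Y)/mm)^2"
  proof -
    have "(X*X - Y*Y)^2 + (2*X*Y)^2 = (X*X + Y*Y)^2" by (simp add: power2_eq_square algebra_simps)
    then show ?thesis unfolding Re\<mu> Im\<mu> by (simp add: power_divide add_divide_distrib[symmetric])
  qed
  also have "\<dots> = of_rat Nr" unfolding Nr_def X_def mm_def Y2
    by (simp add: of_rat_add of_rat_power of_rat_mult of_rat_divide power2_eq_square X_def mult_ac)
  finally have N1: "\<mu> * cnj \<mu> = of_rat Nr" unfolding complex_mult_cnj of_rat_complex by simp
  have NrZ: "Nr \<in> \<int>" using rat_alg_int[of Nr] N1 alg_int_mult[OF \<mu>a alg_int_cnj[OF \<mu>a]] by simp
  have N2: "\<mu>' * cnj \<mu>' = of_rat (1 / Nr)"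
  proof -
    have "\<mu>' * cnj \<mu>' = inverse \<mu> * inverse (cnj \<mu>)" unfolding \<mu>'eq by (simp add: complex_cnj_inverse)
    also have "\<dots> = inverse (\<mu> * cnj \<mu>)" by (simp add: inverse_mult_distrib)
    also have "\<dots> = of_rat (1 / Nr)" unfolding N1 by (simp add: of_rat_inverse divide_inverse)
    finally show ?thesis .
  qed
  have NrZ': "1 / Nr \<in> \<int>" using rat_alg_int[of "1/Nr"] N2 alg_int_mult[OF \<mu>'a alg_int_cnj[OF \<mu>'a]] by simp
  have "\<mu> * cnj \<mu> \<noteq> 0" using \<mu>0 by simp
  then have "Nr \<noteq> 0" using N1 by auto
  moreover have "Nr \<ge> 0" unfolding Nr_def by simp
  ultimately have "Nr = 1" using int_recip_one[OF NrZ NrZ'] by simp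
  moreover have "(P'^2 + of_nat d * Q'^2) / m \<ge> 0" using m0 by simp
  ultimately have "(P'^2 + of_nat d * Q'^2) / m = 1" unfolding Nr_def by (simp add: power2_eq_1_iff)
  then have h1: "P'^2 + of_nat d * Q'^2 = m" using m0 by simp
  have "\<mu> + cnj \<mu> = complex_of_real (2 * Re \<mu>)" by (simp add: complex_add_cnj)
  also have "2 * Re \<mu> = of_rat (2 * (P'^2 - of_nat d * Q'^2) / m)" unfolding Re\<mu> X_def mm_def Y2
    by (simp add: of_rat_add of_rat_diff of_rat_power of_rat_mult of_rat_divide power2_eq_square)
  finally have trc: "\<mu> + cnj \<mu> = of_rat (2 * (P'^2 - of_nat d * Q'^2) / m)" by (simp add: of_rat_complex)
  then have h2: "2 * (P'^2 - of_nat d * Q'^2) / m \<in> \<int>"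
  proof -
    have "alg_int (\<mu> + cnj \<mu>)" using alg_int_add[OF \<mu>a alg_int_cnj[OF \<mu>a]] .
    then have "alg_int (of_rat (2 * (P'^2 - of_nat d * Q'^2) / m))" using trc by simp
    then show ?thesis by (rule rat_alg_int)
  qed
  obtain xx yy where "sqrt (of_rat m) = of_rat xx + of_rat yy * sqrt (real d)"
    using final_arith[OF irr m0 h1 h2] by blast
  moreover have "sqrt ((of_rat a)\<^sup>2 + (of_rat b)\<^sup>2) = sqrt (of_rat m)" unfolding m_def by (simp add: of_rat_add of_rat_power)
  ultimately have "sqrt ((of_rat a)\<^sup>2 + (of_rat b)\<^sup>2) \<in> Qsqrt d" unfolding Qsqrt_def by auto
  then show False using assms(4) by contradiction
qed

end
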